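(* Let $X>0$ and let $w:[0,X]\to\mathbb{R}$ be a smooth function with $w''(x)\ge w(x)$ and $w(x)\ge0$ for all $x\in[0,X]$, and $w'(0)\ge0$. Let $p:[0,X]\to\mathbb{R}^+$ be an increasing integrable function. Then \[\int_0^Xw(x)\,dx\le\frac{2}{p(X/2)}\int_0^Xw(x)p(x)\,dx.\]
   Context: $\mathbb{R}^+$ denotes the positive reals. *)

theory Defs
  imports "HOL-Analysis.Analysis"
begin

definition smooth_on :: "real set \<Rightarrow> (real \<Rightarrow> real) \<Rightarrow> bool" where
  "smooth_on S f \<longleftrightarrow>
     (\<exists>D :: nat \<Rightarrow> real \<Rightarrow> real. D 0 = f \<and>
        (\<forall>n. \<forall>x\<in>S. (D n has_real_derivative D (Suc n) x) (at x within S)))"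

end

theory Submission
  imports Defs
begin

theorem proposition5p5:
  fixes X :: real and w w' w'' p :: "real \<Rightarrow> real"
  assumes X_pos: "X > 0"
    and smooth: "smooth_on {0..X} w"
    and w_deriv: "\<And>x. x \<in> {0..X} \<Longrightarrow> (w has_real_derivative w' x) (at x within {0..X})"
    and w'_deriv: "\<And>x. x \<in> {0..X} \<Longrightarrow> (w' has_real_derivative w'' x) (at x within {0..X})"
    and ineq: "\<And>x. x \<in> {0..X} \<Longrightarrow> w'' x \<ge> w x"
    and nonneg: "\<And>x. x \<in> {0..X} \<Longrightarrow> w x \<ge> 0"
    and w'0: "w' 0 \<ge> 0"
    and p_pos: "\<And>x. x \<in> {0..X} \<Longrightarrow> p x > 0"
    and p_mono: "mono_on {0..X} p"
    and p_int: "p integrable_on {0..X}"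
  shows "integral {0..X} w \<le> 2 / p (X / 2) * integral {0..X} (\<lambda>x. w x * p x)"
proof -
  have contw: "continuous_on {0..X} w"
    using w_deriv using continuous_on_eq_continuous_within DERIV_continuous by blast
  have contw': "continuous_on {0..X} w'"
    using w'_deriv continuous_on_eq_continuous_within DERIV_continuous by blast
  have atw: "(w has_real_derivative w' x) (at x)" if "0 < x" "x < X" for x
    using w_deriv[of x] that at_within_Icc_at[of 0 x X] by auto
  have atw': "(w' has_real_derivative w'' x) (at x)" if "0 < x" "x < X" for x
    using w'_deriv[of x] that at_within_Icc_at[of 0 x X] by auto
  have w'mono: "w' a \<le> w' b" if "0 \<le> a" "a \<le> b" "b \<le> X" for a b
  proof (rule DERIV_nonneg_imp_increasing_open[OF \<open>a \<le> b\<close>])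
    show "\<exists>y. (w' has_real_derivative y) (at x) \<and> 0 \<le> y" if "a < x" "x < b" for x
      using atw'[of x] ineq[of x] nonneg[of x] that \<open>0 \<le> a\<close> \<open>b \<le> X\<close> by force
    show "continuous_on {a..b} w'" using contw' continuous_on_subset that by fastforce
  qed
  have w'nn: "w' x \<ge> 0" if "0 \<le> x" "x \<le> X" for x
    using w'mono[of 0 x] that w'0 by linarith
  have wmono: "w a \<le> w b" if "0 \<le> a" "a \<le> b" "b \<le> X" for a b
  proof (rule DERIV_nonneg_imp_increasing_open[OF \<open>a \<le> b\<close>])
    show "\<exists>y. (w has_real_derivative y) (at x) \<and> 0 \<le> y" if "a < x" "x < b" for x
      using atw[of x] w'nn[of x] that \<open>0 \<le> a\<close> \<open>b \<le> X\<close> by force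
    show "continuous_on {a..b} w" using contw continuous_on_subset that by fastforce
  qed
  have intw: "w integrable_on {a..b}" if "0 \<le> a" "b \<le> X" for a b
    using integrable_continuous_real[of a b w] contw continuous_on_subset that by fastforce
  have pnn: "\<And>x. x \<in> {0..X} \<Longrightarrow> 0 \<le> p x" using p_pos less_imp_le by blast
  have intwp: "(\<lambda>x. w x * p x) integrable_on {0..X}"
  proof -
    have "(\<lambda>x. w x * p x) absolutely_integrable_on {0..X}"
    proof (rule absolutely_integrable_bounded_measurable_product_real)
      show "w \<in> borel_measurable (lebesgue_on {0..X})"
        by (rule continuous_imp_measurable_on_sets_lebesgue[OF contw]) auto
      show "bounded (w ` {0..X})" using compact_continuous_image[OF contw] compact_imp_bounded by blast
      show "p absolutely_integrable_on {0..X}" using nonnegative_absolutely_integrable_1[OF p_int] pnn by blast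
    qed auto
    then show ?thesis using absolutely_integrable_on_def by blast
  qed
  define h where "h = X / 2"
  have h: "0 < h" "h \<le> X" "X = h + h" using X_pos by (auto simp: h_def)
  have intwp2: "(\<lambda>x. w x * p x) integrable_on {a..b}" if "0 \<le> a" "b \<le> X" for a b
    using integrable_on_subinterval[OF intwp] that by auto
  have split1: "integral {0..X} w = integral {0..h} w + integral {h..X} w"
    using Henstock_Kurzweil_Integration.integral_combine[where a=0 and c=h and b=X and f=w] h intw[of 0 X] by simp
  have split2: "integral {0..X} (\<lambda>x. w x * p x) = integral {0..h} (\<lambda>x. w x * p x) + integral {h..X} (\<lambda>x. w x * p x)"
    using Henstock_Kurzweil_Integration.integral_combine[where a=0 and c=h and b=X and f="\<lambda>x. w x * p x"] h intwp by simp
  have shift: "integral {h..X} w = integral {0..h} (\<lambda>x. w (x + h))"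
    using integral_shift_Icc_real[of 0 h w h] h by (simp add: comp_def add.commute)
  have "integral {0..h} w \<le> integral {0..h} (\<lambda>x. w (x + h))"
  proof (rule integral_le)
    show "w integrable_on {0..h}" using intw h by auto
    show "(\<lambda>x. w (x + h)) integrable_on {0..h}"
    proof (rule integrable_continuous_real)
      have "continuous_on {0..h} (\<lambda>x. x + h)" by (intro continuous_intros)
      moreover have "(\<lambda>x. x + h) ` {0..h} \<subseteq> {0..X}" using h by auto
      ultimately show "continuous_on {0..h} (\<lambda>x. w (x + h))"
        using continuous_on_compose2[OF contw] by blast
    qed
    show "\<And>x. x \<in> {0..h} \<Longrightarrow> w x \<le> w (x + h)" using wmono h by auto
  qed
  hence A: "integral {0..X} w \<le> 2 * integral {h..X} w" using split1 shift by linarith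
  have B: "p h * integral {h..X} w \<le> integral {h..X} (\<lambda>x. w x * p x)"
  proof -
    have "integral {h..X} (\<lambda>x. p h * w x) \<le> integral {h..X} (\<lambda>x. w x * p x)"
    proof (rule integral_le)
      show "(\<lambda>x. p h * w x) integrable_on {h..X}" using integrable_on_cmult_left[OF intw[of h X], of "p h"] h by simp
      show "(\<lambda>x. w x * p x) integrable_on {h..X}" using intwp2 h by auto
      fix x assume x: "x \<in> {h..X}"
      have "p h \<le> p x" using p_mono x h by (auto intro: mono_onD)
      then show "p h * w x \<le> w x * p x" using nonneg[of x] x h by (simp add: mult.commute mult_right_mono)
    qed
    then show ?thesis by simp
  qed
  have C: "0 \<le> integral {0..h} (\<lambda>x. w x * p x)"
    using integral_nonneg[OF intwp2[of 0 h]] nonneg pnn h by auto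
  have ph: "p h > 0" using p_pos h by auto
  have "integral {0..X} w \<le> 2 * integral {h..X} w" by (fact A)
  also have "\<dots> \<le> 2 / p h * integral {h..X} (\<lambda>x. w x * p x)"
    using B ph by (simp add: field_simps)
  also have "\<dots> \<le> 2 / p h * integral {0..X} (\<lambda>x. w x * p x)"
    using split2 C ph by (simp add: field_simps)
  finally show ?thesis by (simp add: h_def)
qed

end
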